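(* Let $a>b\geq1$ be coprime integers, $p=a/b$, $\hat n\geq 1$ an integer, $N=(2^b+2)\hat n+2^{a-b}+2^b$, and let $g_0=\mathbf{1}_{(2^b+1)\hat n}\circ\mathbf{0}_{\hat n}\circ\mathbf{0}_{2^{a-b}}\circ\mathbf{1}_{2^b}$ and, for $i\in[2^{a-b}]$, $g_i=\mathbf{0}_{(2^b+2)\hat n}\circ\mathbf{0}_{i-1}\circ 1\circ\mathbf{0}_{2^{a-b}+2^b-i}$. Let $s^*\in\{0,1\}^N$ have zeros in all of its last $2^{a-b}+2^b$ positions. (1) If $\mathrm{hs}(s^*,\mathbf{0}_N)\subseteq[(2^b+1)\hat n]$ and $d(s^*,\mathbf{0}_N)=\hat n$, then $\sum_{i=0}^{2^{a-b}}d(s^*,g_i)^p=(2^a+2^{a-b})(\hat n+1)^p$. (2) Otherwise $\sum_{i=0}^{2^{a-b}}d(s^*,g_i)^p>(2^a+2^{a-b})(\hat n+1)^p$.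
   Context: $d$ denotes Hamming distance; $\mathrm{hs}(s,s')=\{j: s[j]\neq s'[j]\}$; $\mathbf{0}_\ell,\mathbf{1}_\ell$ are the all-zero/all-one strings of length $\ell$; $\circ$ is concatenation; $[t]=\{1,\dots,t\}$. *)

theory Defs
  imports Complex_Main
begin

text \<open>Binary strings are boolean lists (True = 1, False = 0); concatenation is @.
  Positions are 1-based as in the paper.\<close>

definition zeros :: "nat \<Rightarrow> bool list" where "zeros l = replicate l False"
definition ones :: "nat \<Rightarrow> bool list" where "ones l = replicate l True"

definition hs :: "bool list \<Rightarrow> bool list \<Rightarrow> nat set" where
  "hs s s' = {j. 1 \<le> j \<and> j \<le> length s \<and> s ! (j - 1) \<noteq> s' ! (j - 1)}"

definition hamming :: "bool list \<Rightarrow> bool list \<Rightarrow> nat" where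
  "hamming s s' = card (hs s s')"

end

theory Submission imports Defs begin

definition hd' :: "bool list \<Rightarrow> bool list \<Rightarrow> nat" where
  "hd' s t = length (filter (\<lambda>(u,v). u \<noteq> v) (zip s t))"
definition cnt :: "bool list \<Rightarrow> nat" where "cnt l = length (filter id l)"

lemma hamming_hd: assumes "length s = length t" shows "hamming s t = hd' s t"
proof -
  have "hs s t = Suc ` {k. k < length s \<and> s!k \<noteq> t!k}"
  proof (rule set_eqI, rule iffI)
    fix j assume "j \<in> hs s t"
    then have "j = Suc (j - 1)" "j - 1 < length s" "s!(j-1) \<noteq> t!(j-1)" unfolding hs_def by auto
    then show "j \<in> Suc ` {k. k < length s \<and> s!k \<noteq> t!k}" by blast
  next
    fix j assume "j \<in> Suc ` {k. k < length s \<and> s!k \<noteq> t!k}"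
    then show "j \<in> hs s t" unfolding hs_def by auto
  qed
  then have "hamming s t = card {k. k < length s \<and> s!k \<noteq> t!k}"
    unfolding hamming_def by (simp add: card_image)
  also have "\<dots> = hd' s t" unfolding hd'_def length_filter_conv_card
    using assms by (auto simp: case_prod_beta intro!: arg_cong[where f=card])
  finally show ?thesis .
qed

lemma hd_app: "length a = length c \<Longrightarrow> hd' (a@b) (c@d) = hd' a c + hd' b d"
  by (simp add: hd'_def zip_append)
lemma hd_False: "length l = n \<Longrightarrow> hd' l (replicate n False) = cnt l"
  by (induction l arbitrary: n) (auto simp: hd'_def cnt_def)
lemma hd_False2: "length l = n \<Longrightarrow> hd' (replicate n False) l = cnt l"
  by (induction l arbitrary: n) (auto simp: hd'_def cnt_def)
lemma cnt_le: "cnt l \<le> length l" by (simp add: cnt_def)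
lemma hd_True: "length l = n \<Longrightarrow> hd' l (replicate n True) = n - cnt l"
proof (induction l arbitrary: n)
  case Nil then show ?case by (simp add: hd'_def cnt_def)
next
  case (Cons a l)
  then obtain m where "n = Suc m" by auto
  with Cons show ?case using cnt_le[of l] by (auto simp: hd'_def cnt_def Suc_diff_le)
qed
lemma cnt_app: "cnt (a@b) = cnt a + cnt b" by (simp add: cnt_def)
lemma cnt_rep: "cnt (replicate n v) = (if v then n else 0)" by (simp add: cnt_def)

lemma tangent:
  fixes p z w :: real assumes "p > 1" "z > 0" "w > 0"
  shows "w powr p \<ge> z powr p + p * z powr (p-1) * (w - z)"
    and "w \<noteq> z \<Longrightarrow> w powr p > z powr p + p * z powr (p-1) * (w - z)"
proof -
  have D: "\<And>t. t > 0 \<Longrightarrow> ((\<lambda>t. t powr p) has_real_derivative p * t powr (p-1)) (at t)"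
    by (rule has_real_derivative_powr) auto
  have str: "w powr p > z powr p + p * z powr (p-1) * (w - z)" if "w \<noteq> z"
  proof (cases "z < w")
    case True
    obtain \<xi> where xi: "z < \<xi>" "\<xi> < w" "w powr p - z powr p = (w - z) * (p * \<xi> powr (p-1))"
      using MVT2[OF True, of "\<lambda>t. t powr p" "\<lambda>t. p * t powr (p-1)"] D assms by force
    have "z powr (p-1) < \<xi> powr (p-1)" using xi assms by (intro powr_less_mono2) auto
    then have "p * z powr (p-1) * (w - z) < p * \<xi> powr (p-1) * (w - z)"
      using True assms by simp
    then show ?thesis using xi by (simp add: algebra_simps)
  next
    case False
    then have lt: "w < z" using that by simp
    obtain \<xi> where xi: "w < \<xi>" "\<xi> < z" "z powr p - w powr p = (z - w) * (p * \<xi> powr (p-1))"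
      using MVT2[OF lt, of "\<lambda>t. t powr p" "\<lambda>t. p * t powr (p-1)"] D assms by force
    have "\<xi> powr (p-1) < z powr (p-1)" using xi assms by (intro powr_less_mono2) auto
    then have "p * \<xi> powr (p-1) * (z - w) < p * z powr (p-1) * (z - w)"
      using lt assms by simp
    then show ?thesis using xi by (simp add: algebra_simps)
  qed
  show "w \<noteq> z \<Longrightarrow> w powr p > z powr p + p * z powr (p-1) * (w - z)" by (rule str)
  show "w powr p \<ge> z powr p + p * z powr (p-1) * (w - z)"
    using str by (cases "w = z") force+
qed

lemma key:
  fixes a b x y nh :: nat
  assumes b: "b \<ge> 1" and ab: "a > b" and x: "x \<le> (2^b+1)*nh"
  defines "p \<equiv> real a / real b"
  defines "S \<equiv> real ((2^b+1)*nh - x + y + 2^b) powr p + 2^(a-b) * real (x+y+1) powr p"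
  defines "R \<equiv> (2^a + 2^(a-b)) * (real nh+1) powr p"
  shows "S \<ge> R" and "\<not>(y=0 \<and> x=nh) \<Longrightarrow> S > R"
proof -
  define M where "M = real nh + 1"
  define K :: real where "K = 2^(a-b)"
  define C where "C = 2^b * M"
  define D where "D = real ((2^b+1)*nh - x + y + 2^b)"
  define E where "E = real (x+y+1)"
  have p1: "p > 1" using b ab unfolding p_def by (simp add: field_simps)
  have M0: "M > 0" unfolding M_def by simp
  have C0: "C > 0" unfolding C_def using M0 by simp
  have D_eq: "D = C + (real nh - real x) + real y"
    unfolding D_def C_def M_def using x by (simp add: of_nat_diff algebra_simps)
  have E_eq: "E = M + (real x - real nh) + real y" unfolding E_def M_def by simp
  have D0: "D > 0" unfolding D_def of_nat_0_less_iff by simp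
  have E0: "E > 0" unfolding E_def by simp
  have bp: "real b * p = real a" unfolding p_def using b by simp
  have bp1: "real b * (p - 1) = real (a - b)" unfolding p_def using b ab by (simp add: field_simps of_nat_diff)
  have Cp: "C powr p = 2^a * M powr p"
  proof -
    have "((2::real)^b) powr p = 2 powr (real b * p)"
      by (simp add: powr_powr powr_realpow[symmetric])
    also have "\<dots> = 2^a" by (simp add: bp powr_realpow)
    finally show ?thesis unfolding C_def using M0 by (simp add: powr_mult)
  qed
  have Cp1: "C powr (p-1) = K * M powr (p-1)"
  proof -
    have "((2::real)^b) powr (p-1) = 2 powr (real b * (p-1))"
      by (simp add: powr_powr powr_realpow[symmetric])
    also have "\<dots> = K" unfolding K_def by (simp add: bp1 powr_realpow)
    finally show ?thesis unfolding C_def using M0 by (simp add: powr_mult)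
  qed
  have SD: "S = D powr p + K * E powr p" unfolding S_def D_def E_def K_def by simp
  have RM: "R = C powr p + K * M powr p" unfolding R_def Cp K_def M_def by (simp add: algebra_simps)
  have K0: "K > 0" unfolding K_def by simp
  have lin: "p * C powr (p-1) * (D - C) + K * (p * M powr (p-1) * (E - M)) = 2 * p * K * M powr (p-1) * real y"
    unfolding Cp1 D_eq E_eq by (simp add: algebra_simps)
  have lin0: "2 * p * K * M powr (p-1) * real y \<ge> 0" using p1 K0 by simp
  have t1: "D powr p \<ge> C powr p + p * C powr (p-1) * (D - C)" by (rule tangent(1)[OF p1 C0 D0])
  have t2: "E powr p \<ge> M powr p + p * M powr (p-1) * (E - M)" by (rule tangent(1)[OF p1 M0 E0])
  have t2': "K * E powr p \<ge> K * (M powr p + p * M powr (p-1) * (E - M))"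
    using t2 K0 by simp
  show "S \<ge> R" unfolding SD RM using t1 t2' lin lin0 by (simp add: algebra_simps)
  assume nq: "\<not>(y=0 \<and> x=nh)"
  show "S > R"
  proof (cases "y = 0")
    case False
    have "2 * p * K * M powr (p-1) * real y > 0" using p1 K0 M0 False by simp
    then show ?thesis unfolding SD RM using t1 t2' lin by (simp add: algebra_simps)
  next
    case True
    then have "x \<noteq> nh" using nq by simp
    then have "D \<noteq> C" unfolding D_eq using True by simp
    then have t1s: "D powr p > C powr p + p * C powr (p-1) * (D - C)" by (rule tangent(2)[OF p1 C0 D0])
    show ?thesis unfolding SD RM using t1s t2' lin lin0 by (simp add: algebra_simps)
  qed
qed

theorem claim3:
  fixes a b nh :: nat and s :: "bool list"
  assumes "b \<ge> 1" and "a > b" and "coprime a b" and "nh \<ge> 1"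
    and "length s = (2^b + 2) * nh + 2^(a-b) + 2^b"
    and "\<forall>j. (2^b + 2) * nh \<le> j \<and> j < length s \<longrightarrow> s ! j = False"
  defines "N \<equiv> (2^b + 2) * nh + 2^(a-b) + 2^b"
    and "p \<equiv> real a / real b"
    and "g \<equiv> (\<lambda>i::nat. if i = 0
              then ones ((2^b + 1) * nh) @ zeros nh @ zeros (2^(a-b)) @ ones (2^b)
              else zeros ((2^b + 2) * nh) @ zeros (i - 1) @ [True] @ zeros (2^(a-b) + 2^b - i))"
  shows "(hs s (zeros N) \<subseteq> {1..(2^b + 1) * nh} \<and> hamming s (zeros N) = nh \<longrightarrow>
            (\<Sum>i\<in>{0..2^(a-b)}. real (hamming s (g i)) powr p) = (2^a + 2^(a-b)) * (real nh + 1) powr p)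
       \<and> (\<not> (hs s (zeros N) \<subseteq> {1..(2^b + 1) * nh} \<and> hamming s (zeros N) = nh) \<longrightarrow>
            (\<Sum>i\<in>{0..2^(a-b)}. real (hamming s (g i)) powr p) > (2^a + 2^(a-b)) * (real nh + 1) powr p)"
proof -
  define n1 where "n1 = (2^b + 1) * nh"
  define K :: nat where "K = 2^(a-b)"
  define L where "L = length s"
  have n12: "(2^b + 2) * nh = n1 + nh" unfolding n1_def by (simp add: algebra_simps)
  have L: "L = n1 + nh + K + 2^b" unfolding L_def K_def using assms(5) n12 by simp
  have NL: "N = L" unfolding N_def L K_def n12 by simp
  have tail: "\<And>j. n1 + nh \<le> j \<Longrightarrow> j < L \<Longrightarrow> \<not> s ! j" using assms(6) n12 unfolding L_def by auto
  define sA where "sA = take n1 s"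
  define sB where "sB = take nh (drop n1 s)"
  define sT where "sT = drop (n1 + nh) s"
  have lA: "length sA = n1" unfolding sA_def using L L_def by simp
  have lB: "length sB = nh" unfolding sB_def using L L_def by simp
  have sT: "sT = replicate (K + 2^b) False"
    by (rule nth_equalityI) (use L L_def tail in \<open>auto simp: sT_def\<close>)
  have sdec: "s = sA @ sB @ sT" unfolding sA_def sB_def sT_def
    by (metis append_take_drop_id drop_drop add.commute)
  define x where "x = cnt sA"
  define y where "y = cnt sB"
  have x_le: "x \<le> n1" using cnt_le[of sA] lA x_def by simp
  have ham0: "hamming s (zeros N) = x + y"
    using NL L_def by (simp add: hamming_hd zeros_def hd_False sdec cnt_app sT cnt_rep x_def y_def)
  have hamg0: "hamming s (g 0) = n1 - x + y + 2^b"
  proof -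
    have "hamming s (g 0) = hd' (sA @ sB @ sT) (replicate n1 True @ replicate nh False @ (replicate K False @ replicate (2^b) True))"
      unfolding g_def using L L_def sdec
      by (subst hamming_hd) (simp_all add: ones_def zeros_def n1_def K_def)
    also have "\<dots> = n1 - x + y + 2^b"
      using lA lB sT by (simp add: hd_app hd_True hd_False hd_False2 x_def y_def cnt_app cnt_rep)
    finally show ?thesis .
  qed
  have hamgi: "hamming s (g i) = x + y + 1" if i: "1 \<le> i" "i \<le> K" for i
  proof -
    have "hamming s (g i) = hd' ((sA @ sB) @ sT) (replicate (n1 + nh) False @ (replicate (i - 1) False @ [True] @ replicate (K + 2^b - i) False))"
      unfolding g_def using L L_def sdec i
      by (subst hamming_hd) (simp_all add: zeros_def n12 K_def n1_def algebra_simps)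
    also have "\<dots> = hd' (sA @ sB) (replicate (n1 + nh) False) + hd' sT (replicate (i - 1) False @ [True] @ replicate (K + 2^b - i) False)"
      by (rule hd_app) (simp add: lA lB)
    also have "\<dots> = x + y + 1"
      using lA lB sT i by (simp add: hd_False hd_False2 x_def y_def cnt_app cnt_rep cnt_def)
    finally show ?thesis .
  qed
  have sB_nth: "\<And>k. k < nh \<Longrightarrow> sB ! k = s ! (n1 + k)" unfolding sB_def using L L_def by simp
  have y0: "y = 0 \<longleftrightarrow> (\<forall>k<nh. \<not> s ! (n1 + k))"
    unfolding y_def cnt_def using lB sB_nth by (auto simp: filter_empty_conv in_set_conv_nth)
  have hs_eq: "hs s (zeros N) = {j. 1 \<le> j \<and> j \<le> L \<and> s ! (j - 1)}"
    unfolding hs_def zeros_def L_def NL by auto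
  have cond: "(hs s (zeros N) \<subseteq> {1..(2^b + 1) * nh} \<and> hamming s (zeros N) = nh) \<longleftrightarrow> (y = 0 \<and> x = nh)"
  proof
    assume h: "hs s (zeros N) \<subseteq> {1..(2^b + 1) * nh} \<and> hamming s (zeros N) = nh"
    have "y = 0" unfolding y0
    proof (intro allI impI)
      fix k assume k: "k < nh"
      show "\<not> s ! (n1 + k)"
      proof
        assume "s ! (n1 + k)"
        then have "Suc (n1 + k) \<in> hs s (zeros N)" unfolding hs_eq using k L by auto
        then show False using h unfolding n1_def by auto
      qed
    qed
    then show "y = 0 \<and> x = nh" using h ham0 by simp
  next
    assume h: "y = 0 \<and> x = nh"
    have "hs s (zeros N) \<subseteq> {1..(2^b + 1) * nh}"
    proof
      fix j assume "j \<in> hs s (zeros N)"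
      then have j: "1 \<le> j" "j \<le> L" "s ! (j - 1)" unfolding hs_eq by auto
      have "j \<le> n1"
      proof (rule ccontr)
        assume "\<not> j \<le> n1"
        then have "n1 \<le> j - 1" by simp
        moreover have "\<not> j - 1 < n1 + nh"
        proof
          assume "j - 1 < n1 + nh"
          then have "\<not> s ! (n1 + (j - 1 - n1))" using h y0 \<open>n1 \<le> j - 1\<close> by auto
          then show False using j \<open>n1 \<le> j - 1\<close> by simp
        qed
        ultimately show False using tail j by auto
      qed
      then show "j \<in> {1..(2^b + 1) * nh}" using j unfolding n1_def by simp
    qed
    then show "hs s (zeros N) \<subseteq> {1..(2^b + 1) * nh} \<and> hamming s (zeros N) = nh"
      using h ham0 by simp
  qed
  have sum_eq: "(\<Sum>i\<in>{0..2^(a-b)}. real (hamming s (g i)) powr p)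
      = real ((2^b+1)*nh - x + y + 2^b) powr p + 2^(a-b) * real (x+y+1) powr p"
  proof -
    have "{0..2^(a-b)} = insert (0::nat) {1..K}" unfolding K_def by auto
    then have "(\<Sum>i\<in>{0..2^(a-b)}. real (hamming s (g i)) powr p)
        = real (hamming s (g 0)) powr p + (\<Sum>i\<in>{1..K}. real (hamming s (g i)) powr p)" by simp
    also have "(\<Sum>i\<in>{1..K}. real (hamming s (g i)) powr p) = (\<Sum>i\<in>{1..K}. real (x+y+1) powr p)"
      by (rule sum.cong) (auto simp: hamgi)
    finally show ?thesis unfolding hamg0 n1_def K_def by simp
  qed
  have k1: "real ((2^b+1)*nh - x + y + 2^b) powr p + 2^(a-b) * real (x+y+1) powr p \<ge> (2^a + 2^(a-b)) * (real nh+1) powr p"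
    and k2: "\<not>(y=0 \<and> x=nh) \<Longrightarrow> real ((2^b+1)*nh - x + y + 2^b) powr p + 2^(a-b) * real (x+y+1) powr p > (2^a + 2^(a-b)) * (real nh+1) powr p"
    using key[OF assms(1) assms(2), of x nh y] x_le unfolding n1_def p_def by auto
  have eqc: "y = 0 \<and> x = nh \<Longrightarrow> real ((2^b+1)*nh - x + y + 2^b) powr p + 2^(a-b) * real (x+y+1) powr p = (2^a + 2^(a-b)) * (real nh+1) powr p"
  proof -
    assume h: "y = 0 \<and> x = nh"
    have "real ((2^b+1)*nh - x + y + 2^b) = 2^b * (real nh + 1)" using h by (simp add: algebra_simps)
    moreover have "((2::real)^b * (real nh + 1)) powr p = 2^a * (real nh + 1) powr p"
    proof -
      have "((2::real)^b) powr p = 2 powr (real b * p)" by (simp add: powr_powr powr_realpow[symmetric])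
      also have "\<dots> = 2^a" using assms(1) by (simp add: p_def powr_realpow)
      finally show ?thesis by (simp add: powr_mult)
    qed
    ultimately show ?thesis using h by (simp add: algebra_simps)
  qed
  show ?thesis unfolding cond sum_eq using eqc k2 by blast
qed

end
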